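(* Let $\mathbf{X}=\{X_n\}_{n\ge 0}$ be a real-valued integrable process adapted to the filtration $\{\mathcal{F}_n\}_{n\ge0}$, and suppose $\mathbf{X}$ satisfies (A1) and (A4). Then: (i) $X_n\,I\{N_T<\infty\}$ possesses a finite limit a.e. as $n\to\infty$; (ii) if in addition (A2) holds, then $X_n\,I\{N_T<\infty\}\to 0$ a.e.; (iii) a.e., $\limsup_n |X_n|\,I\{N_T=\infty\}\le \limsup_n |U_n|$; (iv) if in addition (A3) holds, then $\lim_n X_n\,I\{N_T=\infty\}=0$ a.e.
   Context: Let $(\Omega,\mathcal{F},P)$ be a probability space with filtration $\mathcal{F}_0\subset\mathcal{F}_1\subset\cdots\subset\mathcal{F}$, and let $\mathbf{X}=\{X_n:n\ge0\}$ be an adapted process with $E|X_n|<\infty$ for all $n$. Residuals: $\epsilon_n=X_n-E[X_n\mid\mathcal{F}_{n-1}]$, $n\ge1$; partial sums $M_{s,t}=\sum_{i=s}^t\epsilon_i$ for $t\ge s\ge1$. $U_n=E[X_n\mid\mathcal{F}_{n-1}]\,I\{X_{n-1}=0\}$, $n\ge1$. Events: $D^+_n=\{X_n>0\}$, $D^-_n=\{X_n<0\}$, $D^0_n=\{X_n=0\}$ for $n\ge0$, and for $n\ge1$, $D_n=D^+_n(D^+_{n-1})^c\cup D^-_n(D^-_{n-1})^c\cup D^0_n(D^0_{n-1})^c$ (a "crossing" at time $n$). For $j\ge1$ define $T_j=\inf\{t\ge1:\sum_{i=1}^t I\{D_i\}\ge j\}$ (with $\inf\emptyset=\infty$), and $N_T=\sup\{j\ge1:T_j<\infty\}$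 (with $N_T=0$ if $T_1=\infty$). Assumptions: (A1) There are constants $\alpha_n\ge0$ with $\sum_n\alpha_n<\infty$ such that a.e., for all $n\ge1$: $0\le \frac{E[X_n\mid\mathcal{F}_{n-1}]}{X_{n-1}}I\{X_{n-1}\ne0\}\le 1+\alpha_n$. (A2) There are constants $0\le k_n\le1$ with $\sum_n(1-k_n)=\infty$ such that a.e., for all $n\ge1$: $0\le \frac{E[X_n\mid\mathcal{F}_{n-1}]}{X_{n-1}}I\{X_{n-1}\ne0\}\le k_n$. (A3) $\lim_n U_n=0$ a.e. (A4) $M_{1,n}$ possesses a finite limit a.e. as $n\to\infty$. *)

theory Defs
  imports "HOL-Probability.Probability"
begin

text \<open>Conditional expectation E[X_n | F_{n-1}] (meaningful for n \<ge> 1).\<close>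
definition cexp :: "'a measure \<Rightarrow> (nat \<Rightarrow> 'a measure) \<Rightarrow> (nat \<Rightarrow> 'a \<Rightarrow> real) \<Rightarrow> nat \<Rightarrow> 'a \<Rightarrow> real" where
  "cexp M F X n = real_cond_exp M (F (n - 1)) (X n)"

definition resid :: "'a measure \<Rightarrow> (nat \<Rightarrow> 'a measure) \<Rightarrow> (nat \<Rightarrow> 'a \<Rightarrow> real) \<Rightarrow> nat \<Rightarrow> 'a \<Rightarrow> real" where
  "resid M F X n x = X n x - cexp M F X n x"

definition Msum :: "'a measure \<Rightarrow> (nat \<Rightarrow> 'a measure) \<Rightarrow> (nat \<Rightarrow> 'a \<Rightarrow> real) \<Rightarrow> nat \<Rightarrow> nat \<Rightarrow> 'a \<Rightarrow> real" where
  "Msum M F X s t x = (\<Sum>i=s..t. resid M F X i x)"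

definition Uproc :: "'a measure \<Rightarrow> (nat \<Rightarrow> 'a measure) \<Rightarrow> (nat \<Rightarrow> 'a \<Rightarrow> real) \<Rightarrow> nat \<Rightarrow> 'a \<Rightarrow> real" where
  "Uproc M F X n x = cexp M F X n x * (if X (n - 1) x = 0 then 1 else 0)"

definition crossing :: "(nat \<Rightarrow> 'a \<Rightarrow> real) \<Rightarrow> nat \<Rightarrow> 'a \<Rightarrow> bool" where
  "crossing X n x =
     ((X n x > 0 \<and> \<not> X (n - 1) x > 0) \<or>
      (X n x < 0 \<and> \<not> X (n - 1) x < 0) \<or>
      (X n x = 0 \<and> \<not> X (n - 1) x = 0))"

text \<open>T_j = inf {t \<ge> 1. sum_{i=1}^t I{D_i} \<ge> j}, with inf of the empty set = \<infinity>.\<close>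
definition Tcross :: "(nat \<Rightarrow> 'a \<Rightarrow> real) \<Rightarrow> nat \<Rightarrow> 'a \<Rightarrow> enat" where
  "Tcross X j x = Inf {enat t | t. t \<ge> 1 \<and> card {i \<in> {1..t}. crossing X i x} \<ge> j}"

text \<open>N_T = sup {j \<ge> 1. T_j < \<infinity>}, with N_T = 0 if T_1 = \<infinity>.\<close>
definition NT :: "(nat \<Rightarrow> 'a \<Rightarrow> real) \<Rightarrow> 'a \<Rightarrow> enat" where
  "NT X x = Sup {enat j | j. j \<ge> 1 \<and> Tcross X j x < \<infinity>}"

end

theory Submission
  imports Defs "HOL-Library.Infinite_Set"
begin

lemma prod_bound:
  fixes V a :: "nat \<Rightarrow> real"
  assumes a: "\<And>i. a i \<ge> 0"
  and st: "\<And>i. s < i \<Longrightarrow> i \<le> n \<Longrightarrow> V i \<le> (1 + a i) * V (i-1)"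
  and nn: "\<And>i. s \<le> i \<Longrightarrow> i \<le> n \<Longrightarrow> V i \<ge> 0"
  and sn: "s \<le> n"
  shows "V n \<le> V s * exp (\<Sum>k\<in>{s<..n}. a k)"
  using st nn sn
proof (induction n)
  case 0
  then show ?case by simp
next
  case (Suc n)
  show ?case
  proof (cases "s = Suc n")
    case True then show ?thesis by simp
  next
    case False
    with Suc.prems have sn: "s \<le> n" by simp
    have IH: "V n \<le> V s * exp (\<Sum>k\<in>{s<..n}. a k)"
      using Suc.IH Suc.prems sn by simp
    have Vs: "V s \<ge> 0" using Suc.prems(2)[of s] sn by simp
    have Vn: "V n \<ge> 0" using Suc.prems(2)[of n] sn by simp
    have "V (Suc n) \<le> (1 + a (Suc n)) * V n" using Suc.prems(1)[of "Suc n"] sn by simp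
    also have "\<dots> \<le> exp (a (Suc n)) * V n"
      by (rule mult_right_mono[OF _ Vn]) simp
    also have "\<dots> \<le> exp (a (Suc n)) * (V s * exp (\<Sum>k\<in>{s<..n}. a k))"
      by (rule mult_left_mono[OF IH]) simp
    also have "\<dots> = V s * exp (\<Sum>k\<in>{s<..Suc n}. a k)"
    proof -
      have "{s<..Suc n} = insert (Suc n) {s<..n}" using sn by auto
      then have "(\<Sum>k\<in>{s<..Suc n}. a k) = a (Suc n) + (\<Sum>k\<in>{s<..n}. a k)" by simp
      then show ?thesis by (simp add: exp_add)
    qed
    finally show ?thesis .
  qed
qed

lemma step_V:
  fixes y y' S S' K a :: real
  assumes "y \<le> (1 + a) * y' + (S - S')" "S' \<le> K" "a \<ge> 0"
  shows "y - S + K \<le> (1 + a) * (y' - S' + K)"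
proof -
  have "a * (K - S') \<ge> 0" using assms by simp
  then show ?thesis using assms(1) by (simp add: algebra_simps)
qed

lemma AD_convergent:
  fixes V a :: "nat \<Rightarrow> real"
  assumes a: "\<And>i. a i \<ge> 0" and sa: "summable a"
  and st: "\<And>i. s < i \<Longrightarrow> V i \<le> (1 + a i) * V (i-1)"
  and nn: "\<And>i. s \<le> i \<Longrightarrow> V i \<ge> 0"
  shows "convergent V"
proof -
  define B where "B = V s * exp (suminf a)"
  have Vs: "V s \<ge> 0" using nn by simp
  have bnd: "V n \<le> B" if "s \<le> n" for n
  proof -
    have "V n \<le> V s * exp (\<Sum>k\<in>{s<..n}. a k)"
      using prod_bound[of a s n V] a st nn that by auto
    also have "\<dots> \<le> V s * exp (suminf a)"
      by (intro mult_left_mono Vs exp_mono sum_le_suminf[OF sa]) (auto simp: a)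
    finally show ?thesis by (simp add: B_def)
  qed
  have B0: "B \<ge> 0" using bnd[of s] nn[of s] by simp
  define W where "W n = V n - B * (\<Sum>i\<le>n. a i)" for n
  have Wstep: "W i \<le> W (i - 1)" if si: "s < i" for i
  proof -
    have "V i - V (i-1) \<le> a i * V (i-1)" using st[OF that] by (simp add: algebra_simps)
    also have "\<dots> \<le> a i * B" using bnd[of "i-1"] that a by (intro mult_left_mono) auto
    finally have 1: "V i - V (i-1) \<le> a i * B" .
    obtain j where j: "i = Suc j" using si by (cases i) auto
    have "(\<Sum>k\<le>i. a k) = a i + (\<Sum>k\<le>i-1. a k)" by (simp add: j)
    then show ?thesis unfolding W_def using 1 by (simp add: algebra_simps)
  qed
  have Wmono: "W n \<le> W m" if "s \<le> m" "m \<le> n" for m n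
    using that
  proof (induction n)
    case 0 then show ?case by simp
  next
    case (Suc n)
    show ?case
    proof (cases "m = Suc n")
      case True then show ?thesis by simp
    next
      case False
      then have "W n \<le> W m" using Suc by simp
      moreover have "W (Suc n) \<le> W n" using Wstep[of "Suc n"] Suc.prems False by simp
      ultimately show ?thesis by simp
    qed
  qed
  have psum: "(\<Sum>i\<le>n. a i) \<le> suminf a" for n
    by (rule sum_le_suminf[OF sa]) (auto simp: a)
  have psum0: "(\<Sum>i\<le>n. a i) \<ge> 0" for n by (simp add: a sum_nonneg)
  have "Bseq (\<lambda>n. W (n + s))"
  proof (rule BseqI')
    fix n
    have "V (n+s) \<ge> 0" "V (n+s) \<le> B" using nn bnd by auto
    moreover have "B * (\<Sum>i\<le>n+s. a i) \<le> B * suminf a" "B * (\<Sum>i\<le>n+s. a i) \<ge> 0"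
      using psum psum0 B0 by (auto intro: mult_left_mono)
    ultimately show "norm (W (n + s)) \<le> B + B * suminf a" unfolding W_def by simp
  qed
  then have "convergent W"
    by (rule Bseq_monoseq_convergent'_dec) (use Wmono in auto)
  moreover have "convergent (\<lambda>n. B * (\<Sum>i\<le>n. a i))"
    using tendsto_mult_left[OF summable_LIMSEQ'[OF sa], of B] by (auto simp: convergent_def)
  ultimately have "convergent (\<lambda>n. W n + B * (\<Sum>i\<le>n. a i))" by (rule convergent_add)
  then show ?thesis by (simp add: W_def)
qed

lemma conv_pos:
  fixes y S a :: "nat \<Rightarrow> real"
  assumes a: "\<And>i. a i \<ge> 0" and sa: "summable a" and cS: "convergent S"
  and st: "\<And>i. s < i \<Longrightarrow> y i \<le> (1 + a i) * y (i-1) + (S i - S (i-1))"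
  and nn: "\<And>i. s \<le> i \<Longrightarrow> y i \<ge> 0"
  shows "convergent y"
proof -
  obtain C where C: "\<And>n. \<bar>S n\<bar> \<le> C"
    using convergent_imp_Bseq[OF cS] unfolding Bseq_def by auto
  define V where "V i = y i - S i + C" for i
  have "convergent V"
  proof (rule AD_convergent[OF a sa])
    fix i assume "s < i"
    show "V i \<le> (1 + a i) * V (i - 1)" unfolding V_def
      by (rule step_V[OF st[OF \<open>s < i\<close>]]) (use C[of "i-1"] a in auto)
  next
    fix i assume "s \<le> i"
    then show "V i \<ge> 0" unfolding V_def using nn[of i] C[of i] by auto
  qed
  then have "convergent (\<lambda>i. V i + S i - C)"
    by (intro convergent_diff convergent_add cS convergent_const)
  then show ?thesis by (simp add: V_def)
qed

lemma zero_lim: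
  fixes y S k :: "nat \<Rightarrow> real"
  assumes cy: "convergent y" and cS: "convergent S"
  and st: "\<And>i. s < i \<Longrightarrow> y i \<le> k i * y (i-1) + (S i - S (i-1))"
  and nn: "\<And>i. s \<le> i \<Longrightarrow> y i \<ge> 0"
  and k: "\<And>i. 0 \<le> k i \<and> k i \<le> 1" and ns: "\<not> summable (\<lambda>n. 1 - k n)"
  shows "y \<longlonglongrightarrow> 0"
proof -
  obtain L where L: "y \<longlonglongrightarrow> L" using cy by (auto simp: convergent_def)
  have L0: "L \<ge> 0" by (rule LIMSEQ_le_const[OF L]) (use nn in auto)
  obtain C where C: "\<And>n. \<bar>S n\<bar> \<le> C"
    using convergent_imp_Bseq[OF cS] unfolding Bseq_def by auto
  have "\<not> L > 0"
  proof
    assume Lp: "L > 0"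
    have "eventually (\<lambda>n. y n > L/2) sequentially"
      by (rule order_tendstoD(1)[OF L]) (use Lp in simp)
    then obtain N0 where N0: "\<And>n. n \<ge> N0 \<Longrightarrow> y n > L/2" by (auto simp: eventually_sequentially)
    define N where "N = max N0 s"
    define f where "f j = 1 - k (j + Suc N)" for j
    have claim: "y (N+m) - S (N+m) \<le> y N - S N - L/2 * (\<Sum>j<m. f j)" for m
    proof (induction m)
      case 0 then show ?case by simp
    next
      case (Suc m)
      let ?i = "N + Suc m"
      have si: "s < ?i" by (simp add: N_def)
      have e1: "?i - 1 = N + m" by simp
      have yi: "y (?i - 1) > L/2" using N0[of "?i - 1"] by (simp add: N_def)
      have "(1 - k ?i) * (L/2) \<le> (1 - k ?i) * y (?i - 1)"
        using k[of ?i] yi by (intro mult_left_mono) auto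
      moreover have "y ?i \<le> k ?i * y (?i-1) + (S ?i - S (?i-1))" by (rule st[OF si])
      moreover have "L/2 * f m = (1 - k ?i) * (L/2)" by (simp add: f_def add.commute)
      moreover have "(\<Sum>j<Suc m. f j) = (\<Sum>j<m. f j) + f m" by simp
      ultimately show ?case using Suc.IH unfolding e1 by (simp only: distrib_left) (simp add: algebra_simps)
    qed
    have "summable f"
    proof (rule summableI_nonneg_bounded)
      fix n show "0 \<le> f n" using k by (simp add: f_def)
    next
      fix m
      have "y (N+m) \<ge> 0" using nn by (simp add: N_def)
      then have "L/2 * (\<Sum>j<m. f j) \<le> y N - S N + 2*C" using claim[of m] C[of "N+m"] by auto
      then show "(\<Sum>j<m. f j) \<le> (y N - S N + 2*C) / (L/2)"
        using Lp by (simp add: field_simps)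
    qed
    then have "summable (\<lambda>n. 1 - k n)"
      unfolding f_def by (rule summable_iff_shift[THEN iffD1])
    with ns show False by simp
  qed
  with L0 have "L = 0" by simp
  with L show ?thesis by simp
qed

lemma run_bound:
  fixes y S a :: "nat \<Rightarrow> real"
  assumes a: "\<And>i. a i \<ge> 0" and sn: "s \<le> n"
  and st: "\<And>i. s < i \<Longrightarrow> i \<le> n \<Longrightarrow> y i \<le> (1 + a i) * y (i-1) + (S i - S (i-1))"
  and nn: "\<And>i. s \<le> i \<Longrightarrow> i \<le> n \<Longrightarrow> y i \<ge> 0"
  and tl: "\<And>i. s \<le> i \<Longrightarrow> i \<le> n \<Longrightarrow> \<bar>S i - S s\<bar> \<le> d"
  shows "y n \<le> (y s + d) * exp (\<Sum>k\<in>{s<..n}. a k)"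
proof -
  define V where "V i = y i - S i + (S s + d)" for i
  have "V n \<le> V s * exp (\<Sum>k\<in>{s<..n}. a k)"
  proof (rule prod_bound[OF a _ _ sn])
    fix i assume "s < i" "i \<le> n"
    have "s \<le> i - 1" "i - 1 \<le> n" using \<open>s < i\<close> \<open>i \<le> n\<close> by arith+
    note h = tl[OF this]
    show "V i \<le> (1 + a i) * V (i - 1)" unfolding V_def
      by (rule step_V[OF st[OF \<open>s < i\<close> \<open>i \<le> n\<close>]]) (use h a in \<open>auto simp: abs_le_iff\<close>)
  next
    fix i assume "s \<le> i" "i \<le> n"
    then show "V i \<ge> 0" unfolding V_def using nn[of i] tl[of i] by auto
  qed
  moreover have "y n \<le> V n" unfolding V_def using tl[of n] sn by auto
  moreover have "V s = y s + d" by (simp add: V_def)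
  ultimately show ?thesis by simp
qed

lemma nocross_sign:
  "\<not> crossing X i x \<Longrightarrow> (X i x > 0 \<longleftrightarrow> X (i-1) x > 0) \<and> (X i x < 0 \<longleftrightarrow> X (i-1) x < 0)"
  unfolding crossing_def by auto

lemma run_sign:
  assumes "\<And>i. s < i \<Longrightarrow> i \<le> n \<Longrightarrow> \<not> crossing X i x" "s \<le> i" "i \<le> n"
  shows "(X i x > 0 \<longleftrightarrow> X s x > 0) \<and> (X i x < 0 \<longleftrightarrow> X s x < 0)"
  using assms(2,3)
proof (induction i)
  case 0 then show ?case by simp
next
  case (Suc i)
  show ?case
  proof (cases "s = Suc i")
    case True then show ?thesis by simp
  next
    case False
    then have "s \<le> i" using Suc by simp
    then have IH: "(X i x > 0 \<longleftrightarrow> X s x > 0) \<and> (X i x < 0 \<longleftrightarrow> X s x < 0)" using Suc by simp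
    have "\<not> crossing X (Suc i) x" using assms(1) Suc.prems \<open>s \<le> i\<close> by simp
    from nocross_sign[OF this] IH show ?thesis by simp
  qed
qed

lemma last_cross:
  assumes "crossing X s0 x" "s0 \<le> n"
  shows "\<exists>s. s0 \<le> s \<and> s \<le> n \<and> crossing X s x \<and> (\<forall>i. s < i \<and> i \<le> n \<longrightarrow> \<not> crossing X i x)"
  using assms(2)
proof (induction n)
  case 0 then show ?case using assms(1) by (intro exI[of _ s0]) auto
next
  case (Suc n)
  show ?case
  proof (cases "s0 = Suc n")
    case True then show ?thesis using assms(1) by (intro exI[of _ s0]) auto
  next
    case False
    then obtain s where s: "s0 \<le> s" "s \<le> n" "crossing X s x" "\<forall>i. s < i \<and> i \<le> n \<longrightarrow> \<not> crossing X i x"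
      using Suc by auto
    show ?thesis
    proof (cases "crossing X (Suc n) x")
      case True then show ?thesis using s by (intro exI[of _ "Suc n"]) auto
    next
      case False then show ?thesis using s by (intro exI[of _ s]) (auto simp: le_Suc_eq)
    qed
  qed
qed

lemma NT_fin:
  assumes "NT X x < \<infinity>"
  shows "finite {i. 1 \<le> i \<and> crossing X i x}"
proof (rule ccontr)
  assume inf: "infinite {i. 1 \<le> i \<and> crossing X i x}"
  have le: "enat j \<le> NT X x" if "j \<ge> 1" for j
  proof -
    obtain B where B: "finite B" "card B = j" "B \<subseteq> {i. 1 \<le> i \<and> crossing X i x}"
      using infinite_arbitrarily_large[OF inf] by blast
    define t where "t = Max (insert 1 B)"
    have t1: "t \<ge> 1" unfolding t_def using B by simp
    have sub: "B \<subseteq> {i \<in> {1..t}. crossing X i x}"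
    proof
      fix i assume i: "i \<in> B"
      have "i \<le> t" unfolding t_def by (rule Max_ge) (use B(1) i in auto)
      with i B(3) show "i \<in> {i \<in> {1..t}. crossing X i x}" by auto
    qed
    have "finite {i \<in> {1..t}. crossing X i x}" by simp
    from card_mono[OF this sub] B(2) have "card {i \<in> {1..t}. crossing X i x} \<ge> j" by simp
    then have "enat t \<in> {enat t | t. t \<ge> 1 \<and> card {i \<in> {1..t}. crossing X i x} \<ge> j}"
      using t1 by blast
    then have "Tcross X j x \<le> enat t" unfolding Tcross_def by (rule Inf_lower)
    then have "Tcross X j x < \<infinity>" by (rule le_less_trans) simp
    then have "enat j \<in> {enat j | j. j \<ge> 1 \<and> Tcross X j x < \<infinity>}" using that by blast
    then show ?thesis unfolding NT_def by (rule Sup_upper)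
  qed
  obtain m where m: "NT X x = enat m" using assms by (cases "NT X x") auto
  have "enat (m+1) \<le> enat m" using le[of "m+1"] m by simp
  then show False by simp
qed

lemma NT_inf:
  assumes "NT X x = \<infinity>"
  shows "infinite {i. 1 \<le> i \<and> crossing X i x}"
proof
  assume fin: "finite {i. 1 \<le> i \<and> crossing X i x}"
  define m where "m = card {i. 1 \<le> i \<and> crossing X i x}"
  have "NT X x \<le> enat m" unfolding NT_def
  proof (rule Sup_least)
    fix y assume "y \<in> {enat j | j. j \<ge> 1 \<and> Tcross X j x < \<infinity>}"
    then obtain j where j: "y = enat j" "Tcross X j x < \<infinity>" by blast
    have "{enat t | t. t \<ge> 1 \<and> card {i \<in> {1..t}. crossing X i x} \<ge> j} \<noteq> {}"
    proof
      assume E: "{enat t | t. t \<ge> 1 \<and> card {i \<in> {1..t}. crossing X i x} \<ge> j} = {}"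
      have "Tcross X j x = \<infinity>" unfolding Tcross_def E by (simp add: top_enat_def)
      with j(2) show False by simp
    qed
    then obtain t where t: "card {i \<in> {1..t}. crossing X i x} \<ge> j" by blast
    have "{i \<in> {1..t}. crossing X i x} \<subseteq> {i. 1 \<le> i \<and> crossing X i x}" by auto
    then have "card {i \<in> {1..t}. crossing X i x} \<le> m" unfolding m_def by (rule card_mono[OF fin])
    then show "y \<le> enat m" using t j by simp
  qed
  then show False using assms by simp
qed


lemma eventual_sign:
  assumes fin: "finite {i. 1 \<le> i \<and> crossing X i x}"
  obtains s0 where "s0 \<ge> 1" "(\<forall>i\<ge>s0. X i x > 0) \<or> (\<forall>i\<ge>s0. X i x < 0) \<or> (\<forall>i\<ge>s0. X i x = 0)"
proof -
  define s0 where "s0 = Max (insert 1 {i. 1 \<le> i \<and> crossing X i x})"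
  have fin2: "finite (insert 1 {i. 1 \<le> i \<and> crossing X i x})" using fin by simp
  have s01: "s0 \<ge> 1" unfolding s0_def by (rule Max_ge[OF fin2]) simp
  have nc: "\<not> crossing X i x" if "s0 < i" for i
  proof
    assume cr: "crossing X i x"
    have "i \<ge> 1" using that s01 by simp
    with cr have "i \<in> insert 1 {i. 1 \<le> i \<and> crossing X i x}" by simp
    then have "i \<le> s0" unfolding s0_def by (rule Max_ge[OF fin2])
    with that show False by simp
  qed
  have sg: "(X i x > 0 \<longleftrightarrow> X s0 x > 0) \<and> (X i x < 0 \<longleftrightarrow> X s0 x < 0)" if "i \<ge> s0" for i
  proof (rule run_sign[of s0 i X x])
    fix j assume "s0 < j" "j \<le> i" then show "\<not> crossing X j x" using nc by simp
  qed (use that in simp_all)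
  have "(\<forall>i\<ge>s0. X i x > 0) \<or> (\<forall>i\<ge>s0. X i x < 0) \<or> (\<forall>i\<ge>s0. X i x = 0)"
  proof (cases "X s0 x > 0")
    case True
    have "\<forall>i\<ge>s0. X i x > 0" using sg True by blast
    then show ?thesis by blast
  next
    case False
    show ?thesis
    proof (cases "X s0 x < 0")
      case True
      have "\<forall>i\<ge>s0. X i x < 0" using sg True by blast
      then show ?thesis by blast
    next
      case False2: False
      have "X i x = 0" if "i \<ge> s0" for i
      proof -
        have "\<not> X i x > 0" "\<not> X i x < 0" using sg[OF that] False False2 by simp_all
        then show ?thesis by linarith
      qed
      then show ?thesis by blast
    qed
  qed
  with s01 that show ?thesis by blast
qed

lemma path_i:
  fixes X :: "nat \<Rightarrow> 'a \<Rightarrow> real" and c a S :: "nat \<Rightarrow> real"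
  assumes a: "\<And>i. a i \<ge> 0" and sa: "summable a" and cS: "convergent S"
  and Sst: "\<And>n. n \<ge> 1 \<Longrightarrow> S n - S (n-1) = X n x - c n"
  and pos: "\<And>n. n \<ge> 1 \<Longrightarrow> X (n-1) x > 0 \<Longrightarrow> 0 \<le> c n \<and> c n \<le> (1 + a n) * X (n-1) x"
  and neg: "\<And>n. n \<ge> 1 \<Longrightarrow> X (n-1) x < 0 \<Longrightarrow> (1 + a n) * X (n-1) x \<le> c n \<and> c n \<le> 0"
  and fin: "finite {i. 1 \<le> i \<and> crossing X i x}"
  shows "convergent (\<lambda>n. X n x)"
proof -
  obtain s0 where s01: "s0 \<ge> 1" and sg: "(\<forall>i\<ge>s0. X i x > 0) \<or> (\<forall>i\<ge>s0. X i x < 0) \<or> (\<forall>i\<ge>s0. X i x = 0)"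
    using eventual_sign[OF fin] by blast
  consider "\<forall>i\<ge>s0. X i x > 0" | "\<forall>i\<ge>s0. X i x < 0" | "\<forall>i\<ge>s0. X i x = 0" using sg by blast
  then show ?thesis
  proof cases
    case 1
    show ?thesis
    proof (rule conv_pos[where s=s0, OF a sa cS])
      fix i assume i: "s0 < i"
      then have "X (i-1) x > 0" using 1 by auto
      from pos[OF _ this] Sst[of i] i s01
      show "X i x \<le> (1 + a i) * X (i - 1) x + (S i - S (i - 1))" by auto
    next
      fix i assume "s0 \<le> i" then show "X i x \<ge> 0" using 1 by auto
    qed
  next
    case 2
    have "convergent (\<lambda>n. - X n x)"
    proof (rule conv_pos[where S="\<lambda>n. - S n" and s=s0, OF a sa])
      show "convergent (\<lambda>n. - S n)" using cS convergent_minus_iff by blast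
    next
      fix i assume i: "s0 < i"
      then have "X (i-1) x < 0" using 2 by auto
      from neg[OF _ this] Sst[of i] i s01
      show "- X i x \<le> (1 + a i) * (- X (i - 1) x) + (- S i - - S (i - 1))" by auto
    next
      fix i assume "s0 \<le> i" then show "- X i x \<ge> 0" using 2 by (auto simp: less_imp_le)
    qed
    then show ?thesis using convergent_minus_iff by blast
  next
    case 3
    have "(\<lambda>n. X n x) \<longlonglongrightarrow> 0"
      by (rule tendsto_eventually) (use 3 in \<open>auto simp: eventually_sequentially\<close>)
    then show ?thesis by (auto simp: convergent_def)
  qed
qed

lemma path_ii:
  fixes X :: "nat \<Rightarrow> 'a \<Rightarrow> real" and c a S k :: "nat \<Rightarrow> real"
  assumes a: "\<And>i. a i \<ge> 0" and sa: "summable a" and cS: "convergent S"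
  and Sst: "\<And>n. n \<ge> 1 \<Longrightarrow> S n - S (n-1) = X n x - c n"
  and pos: "\<And>n. n \<ge> 1 \<Longrightarrow> X (n-1) x > 0 \<Longrightarrow> 0 \<le> c n \<and> c n \<le> (1 + a n) * X (n-1) x"
  and neg: "\<And>n. n \<ge> 1 \<Longrightarrow> X (n-1) x < 0 \<Longrightarrow> (1 + a n) * X (n-1) x \<le> c n \<and> c n \<le> 0"
  and k: "\<And>n. 0 \<le> k n \<and> k n \<le> 1" and ns: "\<not> summable (\<lambda>n. 1 - k n)"
  and posk: "\<And>n. n \<ge> 1 \<Longrightarrow> X (n-1) x > 0 \<Longrightarrow> c n \<le> k n * X (n-1) x"
  and negk: "\<And>n. n \<ge> 1 \<Longrightarrow> X (n-1) x < 0 \<Longrightarrow> k n * X (n-1) x \<le> c n"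
  and fin: "finite {i. 1 \<le> i \<and> crossing X i x}"
  shows "(\<lambda>n. X n x) \<longlonglongrightarrow> 0"
proof -
  have cX: "convergent (\<lambda>n. X n x)" by (rule path_i[OF a sa cS Sst pos neg fin])
  obtain s0 where s01: "s0 \<ge> 1" and sg: "(\<forall>i\<ge>s0. X i x > 0) \<or> (\<forall>i\<ge>s0. X i x < 0) \<or> (\<forall>i\<ge>s0. X i x = 0)"
    using eventual_sign[OF fin] by blast
  consider "\<forall>i\<ge>s0. X i x > 0" | "\<forall>i\<ge>s0. X i x < 0" | "\<forall>i\<ge>s0. X i x = 0" using sg by blast
  then show ?thesis
  proof cases
    case 1
    show ?thesis
    proof (rule zero_lim[where s=s0 and k=k, OF cX cS _ _ k ns])
      fix i assume i: "s0 < i"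
      then have "X (i-1) x > 0" using 1 by auto
      from posk[OF _ this] Sst[of i] i s01
      show "X i x \<le> k i * X (i - 1) x + (S i - S (i - 1))" by auto
    next
      fix i assume "s0 \<le> i" then show "X i x \<ge> 0" using 1 by auto
    qed
  next
    case 2
    have "(\<lambda>n. - X n x) \<longlonglongrightarrow> 0"
    proof (rule zero_lim[where y="\<lambda>n. - X n x" and S="\<lambda>n. - S n" and s=s0 and k=k, OF _ _ _ _ k ns])
      show "convergent (\<lambda>n. - S n)" using cS by (simp only: convergent_minus_iff[symmetric])
      show "convergent (\<lambda>n. - X n x)" using cX by (simp only: convergent_minus_iff[symmetric])
    next
      fix i assume i: "s0 < i"
      then have xn: "X (i-1) x < 0" using 2 by auto
      have h1: "k i * X (i-1) x \<le> c i" using negk[OF _ xn] i s01 by simp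
      have h2: "S i - S (i-1) = X i x - c i" using Sst[of i] i s01 by simp
      have h3: "k i * (- X (i - 1) x) = - (k i * X (i-1) x)" by simp
      show "- X i x \<le> k i * (- X (i - 1) x) + (- S i - - S (i - 1))"
        unfolding h3 using h1 h2 by linarith
    next
      fix i assume "s0 \<le> i" then show "- X i x \<ge> 0" using 2 by (auto simp: less_imp_le)
    qed
    from tendsto_minus[OF this] show ?thesis by simp
  next
    case 3
    show ?thesis
      by (rule tendsto_eventually) (use 3 in \<open>auto simp: eventually_sequentially\<close>)
  qed
qed


lemma cross_val:
  fixes X :: "nat \<Rightarrow> 'a \<Rightarrow> real" and c :: "nat \<Rightarrow> real"
  assumes cr: "crossing X s x"
  and p: "X (s-1) x > 0 \<Longrightarrow> 0 \<le> c s" and n: "X (s-1) x < 0 \<Longrightarrow> c s \<le> 0"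
  shows "\<bar>X s x\<bar> \<le> \<bar>c s * (if X (s-1) x = 0 then 1 else 0)\<bar> + \<bar>X s x - c s\<bar>"
proof (cases "X (s-1) x = 0")
  case True then show ?thesis by simp
next
  case False
  then consider "X (s-1) x > 0" | "X (s-1) x < 0" by linarith
  then show ?thesis
  proof cases
    case 1
    then have "X s x \<le> 0" using cr unfolding crossing_def by auto
    then show ?thesis using p[OF 1] False by auto
  next
    case 2
    then have "X s x \<ge> 0" using cr unfolding crossing_def by auto
    then show ?thesis using n[OF 2] False by auto
  qed
qed

lemma choose_delta:
  fixes c' cc :: real
  assumes "c' < cc"
  obtains d where "d > 0" "(c' + 2*d) * exp d < cc"
proof -
  have t1: "((\<lambda>d. c' + 2*d) \<longlongrightarrow> c' + 2*0) (at_right 0)"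
    by (intro tendsto_add tendsto_const tendsto_mult_left tendsto_ident_at)
  have t2: "((\<lambda>d. exp d) \<longlongrightarrow> exp 0) (at_right (0::real))"
    by (intro tendsto_exp tendsto_ident_at)
  have "((\<lambda>d. (c' + 2*d) * exp d) \<longlongrightarrow> (c' + 2*0) * exp 0) (at_right 0)"
    by (rule tendsto_mult[OF t1 t2])
  then have "((\<lambda>d. (c' + 2*d) * exp d) \<longlongrightarrow> c') (at_right 0)" by simp
  from order_tendstoD(2)[OF this assms]
  obtain b where b: "b > 0" "\<And>y. y > 0 \<Longrightarrow> y < b \<Longrightarrow> (c' + 2*y) * exp y < cc"
    unfolding eventually_at_right_field by auto
  show ?thesis by (rule that[of "b/2"]) (use b(2)[of "b/2"] b(1) in auto)
qed

lemma path_iii: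
  fixes X :: "nat \<Rightarrow> 'a \<Rightarrow> real" and c a S :: "nat \<Rightarrow> real"
  assumes a: "\<And>i. a i \<ge> 0" and sa: "summable a" and cS: "convergent S"
  and Sst: "\<And>n. n \<ge> 1 \<Longrightarrow> S n - S (n-1) = X n x - c n"
  and pos: "\<And>n. n \<ge> 1 \<Longrightarrow> X (n-1) x > 0 \<Longrightarrow> 0 \<le> c n \<and> c n \<le> (1 + a n) * X (n-1) x"
  and neg: "\<And>n. n \<ge> 1 \<Longrightarrow> X (n-1) x < 0 \<Longrightarrow> (1 + a n) * X (n-1) x \<le> c n \<and> c n \<le> 0"
  and inf: "infinite {i. 1 \<le> i \<and> crossing X i x}"
  and cc: "c' < cc"
  and ev: "eventually (\<lambda>n. \<bar>c n * (if X (n-1) x = 0 then 1 else 0)\<bar> < c') sequentially"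
  shows "eventually (\<lambda>n. \<bar>X n x\<bar> < cc) sequentially"
proof -
  obtain N1 where N1: "\<And>n. n \<ge> N1 \<Longrightarrow> \<bar>c n * (if X (n-1) x = 0 then 1 else 0)\<bar> < c'"
    using ev by (auto simp: eventually_sequentially)
  have c'0: "c' > 0" using N1[of N1] by linarith
  obtain d where d0: "d > 0" and dc: "(c' + 2*d) * exp d < cc" using choose_delta[OF cc] by blast
  obtain N2 where N2: "\<And>m n. m \<ge> N2 \<Longrightarrow> n \<ge> N2 \<Longrightarrow> \<bar>S m - S n\<bar> < d"
    using CauchyD[OF convergent_Cauchy[OF cS] d0] by auto
  have cA: "convergent (\<lambda>n. \<Sum>i\<le>n. a i)" using summable_LIMSEQ'[OF sa] by (auto simp: convergent_def)
  obtain N3 where N3: "\<And>m n. m \<ge> N3 \<Longrightarrow> n \<ge> N3 \<Longrightarrow> \<bar>(\<Sum>i\<le>m. a i) - (\<Sum>i\<le>n. a i)\<bar> < d"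
    using CauchyD[OF convergent_Cauchy[OF cA] d0] by auto
  define N where "N = max N1 (max (Suc N2) (max N3 1))"
  obtain s0 where s0: "s0 \<ge> N" "s0 \<in> {i. 1 \<le> i \<and> crossing X i x}"
    using inf unfolding infinite_nat_iff_unbounded_le by blast
  have "\<bar>X n x\<bar> < cc" if n: "n \<ge> s0" for n
  proof -
    obtain s where s: "s0 \<le> s" "s \<le> n" "crossing X s x" "\<forall>i. s < i \<and> i \<le> n \<longrightarrow> \<not> crossing X i x"
      using last_cross[of X s0 x n] s0 n by auto
    have sN: "s \<ge> N" using s s0 by simp
    have s1: "s \<ge> 1" using sN by (simp add: N_def)
    have xs: "\<bar>X s x\<bar> \<le> \<bar>c s * (if X (s-1) x = 0 then 1 else 0)\<bar> + \<bar>X s x - c s\<bar>"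
      by (rule cross_val[OF s(3)]) (use pos[OF s1] neg[OF s1] in auto)
    have "\<bar>X s x - c s\<bar> = \<bar>S s - S (s-1)\<bar>" using Sst[OF s1] by simp
    also have "\<dots> < d"
    proof -
      have "N2 \<le> s - 1" "N2 \<le> s" using sN by (auto simp: N_def)
      then show ?thesis using N2[of s "s-1"] by simp
    qed
    finally have xs2: "\<bar>X s x\<bar> < c' + d" using xs N1[of s] sN by (simp add: N_def)
    have sumA: "(\<Sum>k\<in>{s<..n}. a k) \<le> d"
    proof -
      have "{..n} = {..s} \<union> {s<..n}" using s by auto
      then have "(\<Sum>i\<le>n. a i) = (\<Sum>i\<le>s. a i) + (\<Sum>k\<in>{s<..n}. a k)"
        by (metis sum.union_disjoint finite_atMost finite_greaterThanAtMost ivl_disj_int_one(3))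
      then show ?thesis using N3[of n s] sN s by (simp add: N_def)
    qed
    have tl: "\<bar>S i - S s\<bar> \<le> d" if "s \<le> i" for i
      using N2[of i s] that sN by (simp add: N_def)
    have sg: "(X i x > 0 \<longleftrightarrow> X s x > 0) \<and> (X i x < 0 \<longleftrightarrow> X s x < 0)" if "s \<le> i" "i \<le> n" for i
      by (rule run_sign[of s n X x i]) (use s that in auto)
    have fin: "(y s + d) * exp (\<Sum>k\<in>{s<..n}. a k) < cc" if "y s \<le> \<bar>X s x\<bar>" for y :: "nat \<Rightarrow> real"
    proof -
      have "(y s + d) * exp (\<Sum>k\<in>{s<..n}. a k) \<le> (c' + 2*d) * exp d"
        using that xs2 sumA d0 c'0 by (intro mult_mono) auto
      with dc show ?thesis by simp
    qed
    consider "X s x > 0" | "X s x < 0" | "X s x = 0" by linarith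
    then show ?thesis
    proof cases
      case 1
      have "X n x \<le> (X s x + d) * exp (\<Sum>k\<in>{s<..n}. a k)"
      proof (rule run_bound[where y="\<lambda>i. X i x" and S=S and d=d, OF a s(2)])
        fix i assume i: "s < i" "i \<le> n"
        then have "X (i-1) x > 0" using sg[of "i-1"] 1 by auto
        from pos[OF _ this] Sst[of i] i
        show "X i x \<le> (1 + a i) * X (i - 1) x + (S i - S (i - 1))" by auto
      next
        fix i assume "s \<le> i" "i \<le> n" then show "X i x \<ge> 0" using sg[of i] 1 by auto
      next
        fix i assume "s \<le> i" "i \<le> n" then show "\<bar>S i - S s\<bar> \<le> d" using tl by auto
      qed
      moreover have "X n x > 0" using sg[of n] s 1 by auto
      moreover have "(X s x + d) * exp (\<Sum>k\<in>{s<..n}. a k) < cc" using fin[of "\<lambda>i. X i x"] by simp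
      ultimately show ?thesis by simp
    next
      case 2
      have "- X n x \<le> (- X s x + d) * exp (\<Sum>k\<in>{s<..n}. a k)"
      proof (rule run_bound[where y="\<lambda>i. - X i x" and S="\<lambda>i. - S i" and d=d, OF a s(2)])
        fix i assume i: "s < i" "i \<le> n"
        then have "X (i-1) x < 0" using sg[of "i-1"] 2 by auto
        from neg[OF _ this] Sst[of i] i
        show "- X i x \<le> (1 + a i) * (- X (i - 1) x) + (- S i - - S (i - 1))" by auto
      next
        fix i assume "s \<le> i" "i \<le> n" then show "- X i x \<ge> 0" using sg[of i] 2 by (auto simp: less_imp_le)
      next
        fix i assume "s \<le> i" "i \<le> n" then show "\<bar>- S i - - S s\<bar> \<le> d" using tl[of i] by (simp add: abs_minus_commute)
      qed
      moreover have "X n x < 0" using sg[of n] s 2 by auto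
      moreover have "(- X s x + d) * exp (\<Sum>k\<in>{s<..n}. a k) < cc" using fin[of "\<lambda>i. - X i x"] by simp
      ultimately show ?thesis by simp
    next
      case 3
      have "\<not> X n x > 0" "\<not> X n x < 0" using sg[of n] s 3 by auto
      then show ?thesis using c'0 cc by auto
    qed
  qed
  then show ?thesis by (auto simp: eventually_sequentially)
qed

lemma A1_conv:
  fixes c X b :: real
  assumes "0 \<le> c / X * (if X \<noteq> 0 then 1 else 0)" "c / X * (if X \<noteq> 0 then 1 else 0) \<le> b"
  shows "(X > 0 \<longrightarrow> 0 \<le> c \<and> c \<le> b * X) \<and> (X < 0 \<longrightarrow> b * X \<le> c \<and> c \<le> 0)"
proof (cases "X = 0")
  case True then show ?thesis by simp
next
  case False
  then have h: "0 \<le> c / X" "c / X \<le> b" using assms by auto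
  show ?thesis
  proof (intro conjI impI)
    assume X: "X > 0"
    show "0 \<le> c" using h(1) X by (simp add: zero_le_divide_iff)
    show "c \<le> b * X" using h(2) X by (simp add: divide_le_eq)
  next
    assume X: "X < 0"
    show "c \<le> 0" using h(1) X by (simp add: zero_le_divide_iff)
    show "b * X \<le> c" using h(2) X by (simp add: divide_le_eq)
  qed
qed

lemma Msum_step:
  assumes "n \<ge> 1"
  shows "Msum M F X 1 n x - Msum M F X 1 (n-1) x = X n x - cexp M F X n x"
proof -
  obtain m where m: "n = Suc m" using assms by (cases n) auto
  show ?thesis unfolding m Msum_def by (simp add: resid_def)
qed

theorem theorem1:
  fixes M :: "'a measure" and F :: "nat \<Rightarrow> 'a measure" and X :: "nat \<Rightarrow> 'a \<Rightarrow> real"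
    and \<alpha> :: "nat \<Rightarrow> real"
  assumes prob: "prob_space M"
    and subalg: "\<And>n. subalgebra M (F n)"
    and filt: "\<And>n. sets (F n) \<subseteq> sets (F (Suc n))"
    and adapted: "\<And>n. X n \<in> borel_measurable (F n)"
    and integ: "\<And>n. integrable M (X n)"
    and A1_const: "\<And>n. \<alpha> n \<ge> 0" "summable \<alpha>"
    and A1: "AE x in M. \<forall>n\<ge>1.
               0 \<le> cexp M F X n x / X (n - 1) x * (if X (n - 1) x \<noteq> 0 then 1 else 0) \<and>
               cexp M F X n x / X (n - 1) x * (if X (n - 1) x \<noteq> 0 then 1 else 0) \<le> 1 + \<alpha> n"
    and A4: "AE x in M. \<exists>L. (\<lambda>n. Msum M F X 1 n x) \<longlonglongrightarrow> L"
  shows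
    "(AE x in M. convergent (\<lambda>n. X n x * (if NT X x < \<infinity> then 1 else 0))) \<and>
     ((\<exists>k :: nat \<Rightarrow> real. (\<forall>n. 0 \<le> k n \<and> k n \<le> 1) \<and> \<not> summable (\<lambda>n. 1 - k n) \<and>
        (AE x in M. \<forall>n\<ge>1.
           0 \<le> cexp M F X n x / X (n - 1) x * (if X (n - 1) x \<noteq> 0 then 1 else 0) \<and>
           cexp M F X n x / X (n - 1) x * (if X (n - 1) x \<noteq> 0 then 1 else 0) \<le> k n))
      \<longrightarrow> (AE x in M. (\<lambda>n. X n x * (if NT X x < \<infinity> then 1 else 0)) \<longlonglongrightarrow> 0)) \<and>
     (AE x in M. limsup (\<lambda>n. ereal (\<bar>X n x\<bar> * (if NT X x = \<infinity> then 1 else 0)))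
                   \<le> limsup (\<lambda>n. ereal \<bar>Uproc M F X n x\<bar>)) \<and>
     ((AE x in M. (\<lambda>n. Uproc M F X n x) \<longlonglongrightarrow> 0)
      \<longrightarrow> (AE x in M. (\<lambda>n. X n x * (if NT X x = \<infinity> then 1 else 0)) \<longlonglongrightarrow> 0))"
  proof -
  define S where "S x n = Msum M F X 1 n x" for x n
  define c where "c x n = cexp M F X n x" for x n
  have Sst: "S x n - S x (n-1) = X n x - c x n" if "n \<ge> 1" for x n
    unfolding S_def c_def by (rule Msum_step[OF that])
  have A1': "AE x in M. \<forall>n\<ge>1. (X (n-1) x > 0 \<longrightarrow> 0 \<le> c x n \<and> c x n \<le> (1 + \<alpha> n) * X (n-1) x) \<and>
       (X (n-1) x < 0 \<longrightarrow> (1 + \<alpha> n) * X (n-1) x \<le> c x n \<and> c x n \<le> 0)"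
    using A1
  proof eventually_elim
    case (elim x)
    show ?case
    proof (intro allI impI)
      fix n :: nat assume "n \<ge> 1"
      with elim have "0 \<le> cexp M F X n x / X (n - 1) x * (if X (n - 1) x \<noteq> 0 then 1 else 0)"
        "cexp M F X n x / X (n - 1) x * (if X (n - 1) x \<noteq> 0 then 1 else 0) \<le> 1 + \<alpha> n" by auto
      from A1_conv[OF this] show "(X (n-1) x > 0 \<longrightarrow> 0 \<le> c x n \<and> c x n \<le> (1 + \<alpha> n) * X (n-1) x) \<and>
       (X (n-1) x < 0 \<longrightarrow> (1 + \<alpha> n) * X (n-1) x \<le> c x n \<and> c x n \<le> 0)" by (simp add: c_def)
    qed
  qed
  have A4': "AE x in M. convergent (S x)"
    using A4
  proof eventually_elim
    case (elim x)
    then obtain L where L: "(\<lambda>n. Msum M F X 1 n x) \<longlonglongrightarrow> L" by blast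
    have "S x \<longlonglongrightarrow> L" unfolding S_def using L .
    then show ?case by (auto simp: convergent_def)
  qed
  have P1: "AE x in M. convergent (\<lambda>n. X n x * (if NT X x < \<infinity> then 1 else 0))"
    using A1' A4'
  proof eventually_elim
    case (elim x)
    show ?case
    proof (cases "NT X x < \<infinity>")
      case True
      have "convergent (\<lambda>n. X n x)"
      proof (rule path_i[where a=\<alpha> and S="S x" and c="c x"])
        show "finite {i. 1 \<le> i \<and> crossing X i x}" by (rule NT_fin[OF True])
      qed (use A1_const elim Sst in auto)
      with True show ?thesis by simp
    next
      case False then show ?thesis by (simp add: convergent_const)
    qed
  qed
  have P2: "(\<exists>k :: nat \<Rightarrow> real. (\<forall>n. 0 \<le> k n \<and> k n \<le> 1) \<and> \<not> summable (\<lambda>n. 1 - k n) \<and>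
        (AE x in M. \<forall>n\<ge>1.
           0 \<le> cexp M F X n x / X (n - 1) x * (if X (n - 1) x \<noteq> 0 then 1 else 0) \<and>
           cexp M F X n x / X (n - 1) x * (if X (n - 1) x \<noteq> 0 then 1 else 0) \<le> k n))
      \<longrightarrow> (AE x in M. (\<lambda>n. X n x * (if NT X x < \<infinity> then 1 else 0)) \<longlonglongrightarrow> 0)"
  proof
    assume "\<exists>k :: nat \<Rightarrow> real. (\<forall>n. 0 \<le> k n \<and> k n \<le> 1) \<and> \<not> summable (\<lambda>n. 1 - k n) \<and>
        (AE x in M. \<forall>n\<ge>1.
           0 \<le> cexp M F X n x / X (n - 1) x * (if X (n - 1) x \<noteq> 0 then 1 else 0) \<and>
           cexp M F X n x / X (n - 1) x * (if X (n - 1) x \<noteq> 0 then 1 else 0) \<le> k n)"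
    then obtain k :: "nat \<Rightarrow> real" where k: "\<And>n. 0 \<le> k n \<and> k n \<le> 1" and ns: "\<not> summable (\<lambda>n. 1 - k n)"
      and hk: "AE x in M. \<forall>n\<ge>1.
           0 \<le> cexp M F X n x / X (n - 1) x * (if X (n - 1) x \<noteq> 0 then 1 else 0) \<and>
           cexp M F X n x / X (n - 1) x * (if X (n - 1) x \<noteq> 0 then 1 else 0) \<le> k n" by blast
    have hk': "AE x in M. \<forall>n\<ge>1. (X (n-1) x > 0 \<longrightarrow> c x n \<le> k n * X (n-1) x) \<and>
       (X (n-1) x < 0 \<longrightarrow> k n * X (n-1) x \<le> c x n)"
      using hk
    proof eventually_elim
      case (elim x)
      show ?case
      proof (intro allI impI)
        fix n :: nat assume "n \<ge> 1"
        with elim have "0 \<le> cexp M F X n x / X (n - 1) x * (if X (n - 1) x \<noteq> 0 then 1 else 0)"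
          "cexp M F X n x / X (n - 1) x * (if X (n - 1) x \<noteq> 0 then 1 else 0) \<le> k n" by auto
        from A1_conv[OF this] show "(X (n-1) x > 0 \<longrightarrow> c x n \<le> k n * X (n-1) x) \<and>
         (X (n-1) x < 0 \<longrightarrow> k n * X (n-1) x \<le> c x n)" by (simp add: c_def)
      qed
    qed
    show "AE x in M. (\<lambda>n. X n x * (if NT X x < \<infinity> then 1 else 0)) \<longlonglongrightarrow> 0"
      using A1' A4' hk'
    proof eventually_elim
      case (elim x)
      show ?case
      proof (cases "NT X x < \<infinity>")
        case True
        have "(\<lambda>n. X n x) \<longlonglongrightarrow> 0"
        proof (rule path_ii[where a=\<alpha> and S="S x" and c="c x" and k=k])
          show "finite {i. 1 \<le> i \<and> crossing X i x}" by (rule NT_fin[OF True])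
        qed (use A1_const elim Sst k ns in auto)
        with True show ?thesis by simp
      next
        case False then show ?thesis by (simp add: False)
      qed
    qed
  qed
  have core: "eventually (\<lambda>n. \<bar>X n x\<bar> < cc) sequentially"
    if el: "\<forall>n\<ge>1. (X (n-1) x > 0 \<longrightarrow> 0 \<le> c x n \<and> c x n \<le> (1 + \<alpha> n) * X (n-1) x) \<and>
       (X (n-1) x < 0 \<longrightarrow> (1 + \<alpha> n) * X (n-1) x \<le> c x n \<and> c x n \<le> 0)"
    and cv: "convergent (S x)" and inf: "NT X x = \<infinity>" and cc: "c' < cc"
    and ev: "eventually (\<lambda>n. \<bar>Uproc M F X n x\<bar> < c') sequentially"
    for x c' cc
  proof (rule path_iii[where a=\<alpha> and S="S x" and c="c x" and c'=c'])
    show "infinite {i. 1 \<le> i \<and> crossing X i x}" by (rule NT_inf[OF inf])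
    show "eventually (\<lambda>n. \<bar>c x n * (if X (n-1) x = 0 then 1 else 0)\<bar> < c') sequentially"
      using ev by (simp add: Uproc_def c_def)
  qed (use A1_const el cv Sst cc in auto)
  have P3: "AE x in M. limsup (\<lambda>n. ereal (\<bar>X n x\<bar> * (if NT X x = \<infinity> then 1 else 0)))
                   \<le> limsup (\<lambda>n. ereal \<bar>Uproc M F X n x\<bar>)"
    using A1' A4'
  proof eventually_elim
    case (elim x)
    show ?case
    proof (cases "NT X x = \<infinity>")
      case True
      show ?thesis
      proof (rule dense_ge)
        fix z assume z: "limsup (\<lambda>n. ereal \<bar>Uproc M F X n x\<bar>) < z"
        obtain c' where c1: "limsup (\<lambda>n. ereal \<bar>Uproc M F X n x\<bar>) < ereal c'" and c2: "ereal c' < z"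
          using ereal_dense2[OF z] by blast
        obtain cc where c3: "ereal c' < ereal cc" and c4: "ereal cc < z"
          using ereal_dense2[OF c2] by blast
        have "eventually (\<lambda>n. \<bar>Uproc M F X n x\<bar> < c') sequentially"
          using Limsup_lessD[OF c1] by simp
        then have "eventually (\<lambda>n. \<bar>X n x\<bar> < cc) sequentially"
          using core[OF elim True] c3 by simp
        then have "eventually (\<lambda>n. ereal (\<bar>X n x\<bar> * (if NT X x = \<infinity> then 1 else 0)) \<le> z) sequentially"
        proof eventually_elim
          case (elim n)
          then have "ereal \<bar>X n x\<bar> \<le> ereal cc" by simp
          then have "ereal \<bar>X n x\<bar> \<le> z" using c4 by (meson less_imp_le order_trans)
          then show ?case using True by simp
        qed
        then show "limsup (\<lambda>n. ereal (\<bar>X n x\<bar> * (if NT X x = \<infinity> then 1 else 0))) \<le> z"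
          by (rule Limsup_bounded)
      qed
    next
      case False
      show ?thesis
        by (rule Limsup_mono) (simp add: False)
    qed
  qed
  have P4: "(AE x in M. (\<lambda>n. Uproc M F X n x) \<longlonglongrightarrow> 0)
      \<longrightarrow> (AE x in M. (\<lambda>n. X n x * (if NT X x = \<infinity> then 1 else 0)) \<longlonglongrightarrow> 0)"
  proof
    assume hU: "AE x in M. (\<lambda>n. Uproc M F X n x) \<longlonglongrightarrow> 0"
    show "AE x in M. (\<lambda>n. X n x * (if NT X x = \<infinity> then 1 else 0)) \<longlonglongrightarrow> 0"
      using A1' A4' hU
    proof eventually_elim
      case (elim x)
      show ?case
      proof (cases "NT X x = \<infinity>")
        case True
        have "(\<lambda>n. X n x) \<longlonglongrightarrow> 0"
        proof (rule LIMSEQ_I)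
          fix r :: real assume r: "0 < r"
          have "eventually (\<lambda>n. \<bar>Uproc M F X n x\<bar> < r/2) sequentially"
            using LIMSEQ_D[OF elim(3), of "r/2"] r by (auto simp: eventually_sequentially)
          then have "eventually (\<lambda>n. \<bar>X n x\<bar> < r) sequentially"
            using core[OF elim(1,2) True, of "r/2" r] r by simp
          then show "\<exists>no. \<forall>n\<ge>no. norm (X n x - 0) < r" by (simp add: eventually_sequentially)
        qed
        with True show ?thesis by simp
      next
        case False then show ?thesis by (simp add: False)
      qed
    qed
  qed
  show ?thesis using P1 P2 P3 P4 by blast
qed

end
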